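(* Let $B(x,y)=\sum_{n,k\ge0}B_{n,k}x^ny^k$ be the generating function of the Borel triangle $B_{n,k}=\frac{1}{n+1}\binom{2n+2}{n-k}\binom{n+k}{k}$, and let $c(x)=\frac{1-\sqrt{1-4x}}{2x}=\sum_{n\ge0}\frac{1}{n+1}\binom{2n}{n}x^n$ be the Catalan generating function. Then $$B(x,y)=\frac{1}{1-2x}\,c\!\left(\frac{x(x+y)}{(1-2x)^2}\right).$$
   Context: All identities are identities of formal power series in $x$ with coefficients polynomials in $y$. *)

theory Defs
  imports "HOL-Computational_Algebra.Formal_Power_Series"
          "HOL-Computational_Algebra.Polynomial"
          "HOL-Computational_Algebra.Fraction_Field"
begin

text \<open>Borel triangle entries; the binomial coefficient with negative lower index n-k is 0.\<close>
definition borel :: "nat \<Rightarrow> nat \<Rightarrow> rat" where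
  "borel n k = (if k \<le> n then
     (1 / of_nat (n + 1)) * of_nat ((2*n+2) choose (n-k)) * of_nat ((n+k) choose k) else 0)"

text \<open>Coefficient ring: the fraction field of Q[y], into which Q[y] embeds via p |-> Fract p 1.\<close>
type_synonym coef = "rat poly fract"

definition yvar :: coef where "yvar = Fract [:0, 1:] 1"

definition borel_gf :: "coef fps" where
  "borel_gf = Abs_fps (\<lambda>n. Fract (\<Sum>k\<le>n. monom (borel n k) k) 1)"

definition catalan_gf :: "coef fps" where
  "catalan_gf = Abs_fps (\<lambda>n. Fract [: (1 / of_nat (n + 1)) * of_nat ((2*n) choose n) :] 1)"

end

theory Submission
  imports Defs
begin


lemma binom_step: "(n - k) * (n choose k) = Suc k * (n choose Suc k)"
  using binomial_absorption[of k n] binomial_absorb_comp[of n k] by simp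

lemma R3nat: "(m+1)*(m+1) * ((2*m+2) choose (m+1)) = (2*m+2)*(2*m+1) * ((2*m) choose m)"
proof -
  have a: "(m+1) * ((2*m+2) choose (m+1)) = (2*m+2) * ((2*m+1) choose m)"
    using Suc_times_binomial[of m "2*m+1"] by simp
  have c: "(2*m+1-m) * ((2*m+1) choose m) = Suc m * ((2*m+1) choose Suc m)"
    by (rule binom_step)
  have d: "Suc (2*m) * ((2*m) choose m) = (Suc (2*m) choose Suc m) * Suc m"
    by (rule Suc_times_binomial_eq)
  have b: "(m+1) * ((2*m+1) choose m) = (2*m+1) * ((2*m) choose m)"
    using c d by (simp add: Suc_diff_le mult.commute)
  show ?thesis using a b by (metis mult.assoc mult.left_commute)
qed


declare binomial_Suc_Suc[simp del]

lemma solve_div: "(x::rat) \<noteq> 0 \<Longrightarrow> x * y = z \<Longrightarrow> y = z / x"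
  by (simp add: field_simps)

lemma solve_div_nat: "(x::nat) \<noteq> 0 \<Longrightarrow> of_nat x * y = z \<Longrightarrow> y = z / (of_nat x :: rat)"
  by (simp add: field_simps)

definition cat :: "nat \<Rightarrow> rat" where "cat m = of_nat ((2*m) choose m) / of_nat (m+1)"

definition FF :: "nat \<Rightarrow> nat \<Rightarrow> nat \<Rightarrow> rat" where
  "FF k N m = cat m * of_nat (m choose k) * of_nat (N choose (2*m)) * 2^(N - 2*m)"

definition GG :: "nat \<Rightarrow> nat \<Rightarrow> nat \<Rightarrow> rat" where
  "GG k N m = of_nat (k+1) * of_nat ((2*m) choose m) * of_nat (m choose (k+1)) * of_nat ((N+1) choose (2*m)) * 2^(N + 3 - 2*m)"

lemma pointwise:
  "2 * (of_nat N + 1) * (2 * of_nat N + 3 - 2 * of_nat k) * FF k N m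
   + (of_nat N + 3) * (2 * of_nat k - of_nat N - 1) * FF k (N+1) m
   = GG k N (m+1) - GG k N m"
proof (cases "m < k")
  case True
  then show ?thesis by (simp add: FF_def GG_def binomial_eq_0 del: binomial_Suc_Suc)
next
  case False
  then have mk: "k \<le> m" by simp
  define b where "b = (of_nat (m choose k) :: rat)"
  define c where "c = (of_nat ((2*m) choose m) :: rat)"
  have R4: "of_nat ((m+1) choose (k+1)) = (of_nat (m+1) * b / of_nat (k+1) :: rat)"
  proof -
    have "of_nat (k+1) * of_nat ((m+1) choose (k+1)) = (of_nat (m+1) * b :: rat)"
      unfolding b_def using Suc_times_binomial[of k m] by (metis of_nat_mult Suc_eq_plus1)
    then show ?thesis by (rule solve_div_nat[rotated]) simp
  qed
  have R5: "of_nat (m choose (k+1)) = ((of_nat m - of_nat k) * b / of_nat (k+1) :: rat)"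
  proof -
    have "of_nat (k+1) * of_nat (m choose (k+1)) = (of_nat (m-k) * b :: rat)"
      unfolding b_def using binom_step[of m k] by (metis of_nat_mult Suc_eq_plus1)
    then show ?thesis using mk by (intro solve_div) (auto simp: of_nat_diff)
  qed
  have R3: "of_nat ((2*m+2) choose (m+1)) = (of_nat ((2*m+2)*(2*m+1)) * c / of_nat ((m+1)*(m+1)) :: rat)"
  proof -
    have "of_nat ((m+1)*(m+1)) * of_nat ((2*m+2) choose (m+1)) = (of_nat ((2*m+2)*(2*m+1)) * c :: rat)"
      unfolding c_def using R3nat[of m] by (metis of_nat_mult)
    then show ?thesis by (rule solve_div_nat[rotated]) simp
  qed
  have R3': "of_nat ((2*(m+1)) choose (m+1)) = (of_nat ((2*m+2)*(2*m+1)) * c / of_nat ((m+1)*(m+1)) :: rat)"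
    using R3 by (simp add: algebra_simps)
  consider (a) "2*m+1 \<le> N" | (b) "2*m = N" | (c) "2*m = N+1" | (d) "N+2 \<le> 2*m" by linarith
  then show ?thesis
  proof cases
    case a
    then obtain j where N: "N = 2*m+1+j" using le_Suc_ex by blast
    define A where "A = (of_nat (N choose (2*m)) :: rat)"
    have B1: "of_nat ((N+1) choose (2*m)) = (of_nat (N+1) * A / of_nat (j+2) :: rat)"
    proof -
      have "(Suc N - 2*m) * (Suc N choose (2*m)) = Suc N * (N choose (2*m))"
        using binomial_absorb_comp[of "Suc N" "2*m"] by simp
      moreover have "Suc N - 2*m = j+2" using N by simp
      ultimately have "(j+2) * ((N+1) choose (2*m)) = (N+1) * (N choose (2*m))" by simp
      then have "of_nat (j+2) * of_nat ((N+1) choose (2*m)) = (of_nat (N+1) * A :: rat)"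
        unfolding A_def by (simp only: of_nat_mult[symmetric])
      then show ?thesis by (rule solve_div_nat[rotated]) simp
    qed
    have B2: "of_nat ((N+1) choose (2*m+2)) = (of_nat (N+1) * of_nat (j+1) * A / of_nat ((2*m+2)*(2*m+1)) :: rat)"
    proof -
      have e1: "Suc (2*m+1) * (Suc N choose Suc (2*m+1)) = Suc N * (N choose (2*m+1))"
        by (rule Suc_times_binomial)
      have e2: "(N - 2*m) * (N choose (2*m)) = Suc (2*m) * (N choose Suc (2*m))"
        by (rule binom_step)
      have "(2*m+2)*(2*m+1) * ((N+1) choose (2*m+2)) = (N+1)*(j+1) * (N choose (2*m))"
      proof -
        have e1': "(2*m+2) * ((N+1) choose (2*m+2)) = (N+1) * (N choose (2*m+1))"
          using e1 by simp
        have "(2*m+2)*(2*m+1) * ((N+1) choose (2*m+2)) = (2*m+1) * ((2*m+2) * ((N+1) choose (2*m+2)))"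
          by (simp only: ac_simps)
        also have "\<dots> = (2*m+1) * ((N+1) * (N choose (2*m+1)))"
          by (simp only: e1')
        also have "\<dots> = (N+1) * ((2*m+1) * (N choose (2*m+1)))" by (simp add: algebra_simps)
        also have "\<dots> = (N+1) * ((N - 2*m) * (N choose (2*m)))" using e2 by simp
        also have "\<dots> = (N+1)*(j+1) * (N choose (2*m))"
        proof -
          have "N - 2*m = j+1" using N by simp
          then show ?thesis by (simp only: mult.assoc)
        qed
        finally show ?thesis .
      qed
      then have "of_nat ((2*m+2)*(2*m+1)) * of_nat ((N+1) choose (2*m+2)) = (of_nat (N+1) * of_nat (j+1) * A :: rat)"
        unfolding A_def by (simp only: of_nat_mult[symmetric])
      then show ?thesis by (rule solve_div_nat[rotated]) simp
    qed
    have B2': "of_nat ((N+1) choose (2*(m+1))) = (of_nat (N+1) * of_nat (j+1) * A / of_nat ((2*m+2)*(2*m+1)) :: rat)"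
      using B2 by (simp add: algebra_simps)
    have p1: "N - 2*m = j+1" "N + 1 - 2*m = j+2" "N + 3 - 2*m = j+4" "N + 3 - 2*(m+1) = j+2"
      using N by auto
    define u where "u = (of_nat (m+1) :: rat)"
    define v where "v = (of_nat (j+2) :: rat)"
    define w where "w = (of_nat (k+1) :: rat)"
    define s where "s = (of_nat (2*m+1) :: rat)"
    define x where "x = (2^j :: rat)"
    have nz: "u \<noteq> 0" "v \<noteq> 0" "w \<noteq> 0" "s \<noteq> 0"
      unfolding u_def v_def w_def s_def by (simp_all del: of_nat_add of_nat_Suc)
    have Nr: "(of_nat N :: rat) = 2*u+v-3" unfolding u_def v_def N by simp
    have kr: "(of_nat k :: rat) = w-1" unfolding w_def by simp
    have mkr: "(of_nat m - of_nat k :: rat) = u-w" unfolding w_def u_def by simp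
    have pw: "(2::rat)^(j+1) = x*2" "(2::rat)^(j+2) = x*4" "(2::rat)^(j+4) = x*16"
      unfolding x_def by (simp_all add: power_add)
    have us: "of_nat ((2*m+2)*(2*m+1)) = (2*u*s::rat)" "of_nat((m+1)*(m+1)) = (u*u::rat)"
      unfolding u_def s_def by (simp_all add: algebra_simps)
    have R3'': "of_nat ((2*(m+1)) choose (m+1)) = (2*u*s) * c / (u*u)"
      unfolding R3' by (simp only: us)
    have B1': "of_nat ((N+1) choose (2*m)) = (of_nat N+1) * A / v"
      unfolding B1 v_def by simp
    have B2'': "of_nat ((N+1) choose (2*(m+1))) = (of_nat N+1) * (v-1) * A / (2*u*s)"
      unfolding B2' by (simp only: us v_def) simp
    have R4': "of_nat ((m+1) choose (k+1)) = u * b / w" unfolding R4 u_def w_def ..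
    have R5': "of_nat (m choose (k+1)) = (u - w) * b / w" unfolding R5 mkr w_def ..
    show ?thesis
      unfolding FF_def GG_def cat_def
      apply (simp only: p1 B1' B2'' R3'' R4' R5' pw flip: b_def c_def A_def u_def w_def)
      apply (simp only: Nr kr)
      using nz by (simp add: field_simps)
  next
    case b
    define u where "u = (of_nat (m+1) :: rat)"
    define w where "w = (of_nat (k+1) :: rat)"
    have nz: "u \<noteq> 0" "w \<noteq> 0"
      unfolding u_def w_def by (simp_all del: of_nat_add of_nat_Suc)
    have Nr: "(of_nat N :: rat) = 2*u-2" unfolding u_def using b[symmetric] by simp
    have kr: "(of_nat k :: rat) = w-1" unfolding w_def by simp
    have mkr: "(of_nat m - of_nat k :: rat) = u-w" unfolding w_def u_def by simp
    have R5': "of_nat (m choose (k+1)) = (u - w) * b / w" unfolding R5 mkr w_def ..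
    have bs: "N choose (2*m) = 1" "(N+1) choose (2*m) = N+1" "(N+1) choose (2*(m+1)) = 0"
      "N - 2*m = 0" "N + 1 - 2*m = 1" "N + 3 - 2*m = 3"
      using b by (auto simp: binomial_eq_0)
    show ?thesis
      unfolding FF_def GG_def cat_def
      apply (simp only: bs R5' flip: b_def c_def u_def w_def)
      apply (simp only: of_nat_add Nr kr of_nat_1 power_0 power_one)
      using nz by (simp add: field_simps)
  next
    case c
    define u where "u = (of_nat (m+1) :: rat)"
    define w where "w = (of_nat (k+1) :: rat)"
    have nz: "u \<noteq> 0" "w \<noteq> 0"
      unfolding u_def w_def by (simp_all del: of_nat_add of_nat_Suc)
    have Nr: "(of_nat N :: rat) = 2*u-3" unfolding u_def using c[symmetric] by simp
    have kr: "(of_nat k :: rat) = w-1" unfolding w_def by simp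
    have mkr: "(of_nat m - of_nat k :: rat) = u-w" unfolding w_def u_def by simp
    have R5': "of_nat (m choose (k+1)) = (u - w) * b / w" unfolding R5 mkr w_def ..
    have bs: "N choose (2*m) = 0" "(N+1) choose (2*m) = 1" "(N+1) choose (2*(m+1)) = 0"
      "N + 1 - 2*m = 0" "N + 3 - 2*m = 2"
      using c by (auto simp: binomial_eq_0)
    show ?thesis
      unfolding FF_def GG_def cat_def
      apply (simp only: bs R5' flip: b_def c_def u_def w_def)
      apply (simp only: of_nat_add Nr kr of_nat_1 of_nat_0 power_0 power_one)
      using nz by (simp add: field_simps)
  next
    case d
    have bs: "N choose (2*m) = 0" "(N+1) choose (2*m) = 0" "(N+1) choose (2*(m+1)) = 0"
      using d by (auto simp: binomial_eq_0)
    show ?thesis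
      unfolding FF_def GG_def by (simp only: bs mult_zero_right mult_zero_left of_nat_0 diff_self add_0_right)
  qed
qed


definition SS :: "nat \<Rightarrow> nat \<Rightarrow> rat" where "SS k N = (\<Sum>m\<le>N. FF k N m)"

lemma FF_zero: "N < 2*m \<Longrightarrow> FF k N m = 0"
  by (simp add: FF_def binomial_eq_0)

lemma SS_rec:
  "2 * (of_nat N + 1) * (2 * of_nat N + 3 - 2 * of_nat k) * SS k N
   + (of_nat N + 3) * (2 * of_nat k - of_nat N - 1) * SS k (N+1) = 0"
proof -
  have e: "SS k (N+1) = (\<Sum>m\<le>N. FF k (N+1) m)"
  proof -
    have "FF k (Suc N) (Suc N) = 0" by (rule FF_zero) simp
    then show ?thesis unfolding SS_def by simp
  qed
  have "2 * (of_nat N + 1) * (2 * of_nat N + 3 - 2 * of_nat k) * SS k N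
   + (of_nat N + 3) * (2 * of_nat k - of_nat N - 1) * SS k (N+1)
   = (\<Sum>m\<le>N. 2 * (of_nat N + 1) * (2 * of_nat N + 3 - 2 * of_nat k) * FF k N m
   + (of_nat N + 3) * (2 * of_nat k - of_nat N - 1) * FF k (N+1) m)"
    by (simp only: e) (simp add: SS_def sum.distrib sum_distrib_left)
  also have "\<dots> = (\<Sum>m<Suc N. GG k N (Suc m) - GG k N m)"
    unfolding pointwise lessThan_Suc_atMost by simp
  also have "\<dots> = GG k N (Suc N) - GG k N 0" by (rule sum_lessThan_telescope)
  also have "\<dots> = 0" by (simp add: GG_def binomial_eq_0)
  finally show ?thesis .
qed

definition QQ :: "nat \<Rightarrow> nat \<Rightarrow> nat" where
  "QQ k n = ((2*n+2) choose (n-k)) * ((n+k) choose k)"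

lemma QQ_rec:
  assumes "k \<le> n"
  shows "(n+k+3)*(n+1-k)*(n+1) * QQ k (n+1) = 2*(n+k+1)*(2*n+3)*(n+2) * QQ k n"
proof -
  define a where "a = n - k"
  have e1: "Suc a * (Suc (2*n+3) choose Suc a) = Suc (2*n+3) * ((2*n+3) choose a)"
    by (rule Suc_times_binomial)
  have e2: "(Suc (2*n+2) - a) * (Suc (2*n+2) choose a) = Suc (2*n+2) * ((2*n+2) choose a)"
    using binomial_absorb_comp[of "Suc (2*n+2)" a] by simp
  have e3: "(Suc (n+k) - k) * (Suc (n+k) choose k) = Suc (n+k) * ((n+k) choose k)"
    using binomial_absorb_comp[of "Suc (n+k)" k] by simp
  have h1: "Suc (2*n+2) - a = n+k+3" unfolding a_def using assms by simp
  have h2: "Suc (n+k) - k = n+1" by simp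
  have f1: "(a+1)*(n+k+3) * ((2*n+4) choose (a+1)) = (2*n+4)*(2*n+3) * ((2*n+2) choose a)"
  proof -
    have e1': "(a+1) * ((2*n+4) choose (a+1)) = (2*n+4) * ((2*n+3) choose a)"
      using e1 by (simp add: numeral_eq_Suc)
    have e2': "(n+k+3) * ((2*n+3) choose a) = (2*n+3) * ((2*n+2) choose a)"
      using e2 unfolding h1 by (simp add: numeral_eq_Suc)
    have "(a+1)*(n+k+3) * ((2*n+4) choose (a+1)) = (n+k+3) * ((a+1) * ((2*n+4) choose (a+1)))"
      by (simp only: ac_simps)
    also have "\<dots> = (2*n+4) * ((n+k+3) * ((2*n+3) choose a))" unfolding e1' by (simp only: ac_simps)
    also have "\<dots> = (2*n+4)*(2*n+3) * ((2*n+2) choose a)" unfolding e2' by (simp only: ac_simps)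
    finally show ?thesis .
  qed
  have f2: "(n+1) * ((n+k+1) choose k) = (n+k+1) * ((n+k) choose k)"
    using e3 unfolding h2 by simp
  have qa: "QQ k (n+1) = ((2*n+4) choose (a+1)) * ((n+k+1) choose k)"
  proof -
    have h3: "2*(n+1)+2 = 2*n+4" "n+1-k = n-k+1" "n+1+k = n+k+1" using assms by auto
    show ?thesis unfolding QQ_def a_def by (simp only: h3)
  qed
  have qb: "QQ k n = ((2*n+2) choose a) * ((n+k) choose k)"
    unfolding QQ_def a_def ..
  have "(n+k+3)*(n+1-k)*(n+1) * QQ k (n+1)
      = ((a+1)*(n+k+3) * ((2*n+4) choose (a+1))) * ((n+1) * ((n+k+1) choose k))"
  proof -
    have h: "n+1-k = a+1" unfolding a_def using assms by simp
    show ?thesis unfolding qa h by (simp only: ac_simps)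
  qed
  also have "\<dots> = ((2*n+4)*(2*n+3) * ((2*n+2) choose a)) * ((n+k+1) * ((n+k) choose k))"
    unfolding f1 f2 ..
  also have "\<dots> = 2*(n+k+1)*(2*n+3)*(n+2) * QQ k n"
    unfolding qb by (simp add: algebra_simps)
  finally show ?thesis .
qed

lemma SS_base: "of_nat (k+1) * SS k (k+k) = of_nat (QQ k k)"
proof -
  have "\<And>m. FF k (k+k) m = (if m = k then cat k else 0)"
  proof -
    fix m
    show "FF k (k+k) m = (if m = k then cat k else 0)"
    proof (cases "m < k")
      case True then show ?thesis by (simp add: FF_def binomial_eq_0)
    next
      case False
      show ?thesis
      proof (cases "m = k")
        case True then show ?thesis by (simp add: FF_def mult_2)
      next
        case f2: False
        with False have "k+k < 2*m" by simp
        then show ?thesis using f2 by (simp add: FF_zero)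
      qed
    qed
  qed
  then have "SS k (k+k) = cat k" unfolding SS_def by simp
  then show ?thesis by (simp add: cat_def QQ_def mult_2)
qed

lemma SS_closed:
  assumes "k \<le> n"
  shows "of_nat (n+1) * SS k (n+k) = of_nat (QQ k n)"
  using assms
proof (induction n rule: dec_induct)
  case base
  then show ?case using SS_base by simp
next
  case (step n)
  define D where "D = (of_nat ((n+k+3)*(n+1-k)) :: rat)"
  have Dnz: "D \<noteq> 0" unfolding D_def using step.hyps(1) by simp
  have rec0: "2 * (of_nat (n+k) + 1) * (2 * of_nat (n+k) + 3 - 2 * of_nat k) * SS k (n+k)
   + (of_nat (n+k) + 3) * (2 * of_nat k - of_nat (n+k) - 1) * SS k (n+k+1) = 0"
    by (rule SS_rec)
  have P0: "(2 * (of_nat (n+k) + 1) * (2 * of_nat (n+k) + 3 - 2 * of_nat k) :: rat) = of_nat (2*(n+k+1)*(2*n+3))"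
    by (simp add: algebra_simps)
  have P1: "((of_nat (n+k) + 3) * (2 * of_nat k - of_nat (n+k) - 1) :: rat) = - D"
  proof -
    have "(of_nat (n+1-k)::rat) = of_nat n + 1 - of_nat k" using step.hyps(1) by (simp add: of_nat_diff)
    then show ?thesis unfolding D_def of_nat_mult by (simp add: algebra_simps)
  qed
  have rec: "D * SS k (Suc n + k) = of_nat (2*(n+k+1)*(2*n+3)) * SS k (n+k)"
    using rec0 unfolding P0 P1 by (simp add: algebra_simps)
  have Q: "D * of_nat (n+1) * of_nat (QQ k (Suc n)) = of_nat (2*(n+k+1)*(2*n+3)*(n+2)) * of_nat (QQ k n)"
    using QQ_rec[OF step.hyps(1)] unfolding D_def by (metis Suc_eq_plus1 of_nat_mult)
  have "D * of_nat (n+1) * (of_nat (Suc n + 1) * SS k (Suc n + k))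
     = of_nat (n+2) * of_nat (n+1) * (D * SS k (Suc n + k))" by (simp add: algebra_simps)
  also have "\<dots> = of_nat (n+2) * of_nat (2*(n+k+1)*(2*n+3)) * (of_nat (n+1) * SS k (n+k))"
    unfolding rec by (simp add: algebra_simps)
  also have "\<dots> = D * of_nat (n+1) * of_nat (QQ k (Suc n))"
    unfolding step.IH Q by (simp add: algebra_simps)
  finally have "D * of_nat (n+1) * (of_nat (Suc n + 1) * SS k (Suc n + k)) = D * of_nat (n+1) * of_nat (QQ k (Suc n))" .
  then show ?case using Dnz by simp
qed



abbreviation qq :: "coef fps" where "qq \<equiv> inverse (1 - 2 * fps_X)"

lemma q_eq: "qq = Abs_fps (\<lambda>n. 2^n)"
proof (rule fps_inverse_unique)
  show "(1 - 2 * fps_X) * Abs_fps (\<lambda>n. 2^n) = (1 :: coef fps)"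
  proof (rule fps_ext)
    fix n
    have e2: "(2 :: coef fps) = fps_const 2" by (simp add: numeral_fps_const)
    have "fps_nth (2 * fps_X * Abs_fps (\<lambda>n. 2^n :: coef)) n = (if n = 0 then 0 else 2^n)"
      unfolding e2 mult.assoc fps_mult_left_const_nth fps_X_mult_nth
      by (cases n) simp_all
    then show "fps_nth ((1 - 2 * fps_X) * Abs_fps (\<lambda>n. 2^n)) n = fps_nth (1 :: coef fps) n"
      by (simp add: algebra_simps)
  qed
qed

lemma q_pow: "fps_nth (qq^(Suc r)) j = of_nat ((r+j) choose j) * 2^j"
proof (induction r arbitrary: j)
  case 0
  then show ?case by (simp add: q_eq)
next
  case (Suc r)
  have "fps_nth (qq^(Suc (Suc r))) j = (\<Sum>i=0..j. fps_nth (qq^(Suc r)) i * 2^(j-i))"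
    by (simp only: power_Suc2[of qq "Suc r"] fps_mult_nth) (simp add: q_eq)
  also have "\<dots> = (\<Sum>i=0..j. of_nat ((r+i) choose i) * 2^j)"
  proof (rule sum.cong[OF refl])
    fix i assume "i \<in> {0..j}"
    then have "(2::coef)^i * 2^(j-i) = 2^j" by (simp add: power_add[symmetric])
    then show "fps_nth (qq^(Suc r)) i * 2^(j-i) = of_nat ((r+i) choose i) * 2^j"
      unfolding Suc.IH by (simp add: mult.assoc)
  qed
  also have "\<dots> = of_nat (\<Sum>i\<le>j. (r+i) choose i) * 2^j"
    by (simp add: sum_distrib_right atLeast0AtMost)
  also have "\<dots> = of_nat ((Suc r + j) choose j) * 2^j"
    unfolding sum_choose_lower by simp
  finally show ?case .
qed

lemma compose_swap:
  fixes q a b :: "coef fps"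
  assumes b0: "fps_nth b 0 = 0"
  shows "fps_nth (q * (a oo b)) n = (\<Sum>m\<le>n. fps_nth a m * fps_nth (q * b^m) n)"
proof -
  have z: "\<And>m j. j < m \<Longrightarrow> fps_nth (b^m) j = 0" using startsby_zero_power_prefix[OF b0] by blast
  have c: "\<And>i. i \<le> n \<Longrightarrow> fps_nth (a oo b) (n-i) = (\<Sum>m\<le>n. fps_nth a m * fps_nth (b^m) (n-i))"
  proof -
    fix i assume "i \<le> n"
    show "fps_nth (a oo b) (n-i) = (\<Sum>m\<le>n. fps_nth a m * fps_nth (b^m) (n-i))"
      unfolding fps_compose_nth atLeast0AtMost
      by (rule sum.mono_neutral_left) (auto simp: z)
  qed
  have "fps_nth (q * (a oo b)) n = (\<Sum>i\<le>n. fps_nth q i * (\<Sum>m\<le>n. fps_nth a m * fps_nth (b^m) (n-i)))"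
    unfolding fps_mult_nth atLeast0AtMost by (rule sum.cong[OF refl]) (simp add: c)
  also have "\<dots> = (\<Sum>m\<le>n. fps_nth a m * (\<Sum>i\<le>n. fps_nth q i * fps_nth (b^m) (n-i)))"
  proof -
    have "(\<Sum>i\<le>n. fps_nth q i * (\<Sum>m\<le>n. fps_nth a m * fps_nth (b^m) (n-i)))
        = (\<Sum>i\<le>n. \<Sum>m\<le>n. fps_nth a m * (fps_nth q i * fps_nth (b^m) (n-i)))"
      by (simp only: sum_distrib_left mult.left_commute)
    also have "\<dots> = (\<Sum>m\<le>n. \<Sum>i\<le>n. fps_nth a m * (fps_nth q i * fps_nth (b^m) (n-i)))"
      by (rule sum.swap)
    also have "\<dots> = (\<Sum>m\<le>n. fps_nth a m * (\<Sum>i\<le>n. fps_nth q i * fps_nth (b^m) (n-i)))"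
      by (simp only: sum_distrib_left)
    finally show ?thesis .
  qed
  also have "\<dots> = (\<Sum>m\<le>n. fps_nth a m * fps_nth (q * b^m) n)"
    unfolding fps_mult_nth atLeast0AtMost ..
  finally show ?thesis .
qed



lemma borel_eq:
  assumes "k \<le> n"
  shows "borel n k = (\<Sum>m\<le>n. FF k (n+k) m)"
proof -
  have "of_nat (n+1) * SS k (n+k) = of_nat (QQ k n)" by (rule SS_closed[OF assms])
  then have "SS k (n+k) = borel n k"
    unfolding borel_def QQ_def using assms by (simp add: field_simps)
  moreover have "SS k (n+k) = (\<Sum>m\<le>n. FF k (n+k) m)"
    unfolding SS_def
  proof (rule sum.mono_neutral_right)
    show "\<forall>i\<in>{..n+k} - {..n}. FF k (n+k) i = 0"
    proof
      fix i assume "i \<in> {..n+k} - {..n}"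
      then have "n < i" by simp
      then show "FF k (n+k) i = 0" using assms by (intro FF_zero) linarith
    qed
  qed auto
  ultimately show ?thesis by simp
qed

lemma Fract_add1: "Fract (a+b) 1 = Fract a 1 + Fract (b::'a::idom) 1"
  by simp

lemma Fract_sum: "Fract (\<Sum>i\<in>A. f i) 1 = (\<Sum>i\<in>A. Fract (f i) 1)"
  by (induction A rule: infinite_finite_induct) (simp_all add: Zero_fract_def Fract_add1)

lemma yvar_pow: "yvar ^ e = Fract ([:0,1:]^e) 1"
  by (induction e) (simp_all add: yvar_def One_fract_def)

lemma FR: "Fract [:c:] 1 * (of_nat a * yvar^e * Fract [:r:] 1) = Fract (monom (c * of_nat a * r) e) 1"
  by (simp add: yvar_pow of_nat_fract of_nat_poly monom_altdef ac_simps)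

lemma ifR: "(if P then of_nat B * 2^J else 0 :: coef) = Fract [:if P then of_nat B * 2^J else 0:] 1"
proof -
  have "(of_nat B * 2^J :: coef) = of_nat (B * 2^J)" by simp
  also have "\<dots> = Fract [:of_nat (B * 2^J):] 1" by (simp add: of_nat_fract of_nat_poly)
  finally show ?thesis by (simp add: Zero_fract_def)
qed



abbreviation uu :: "coef fps" where
  "uu \<equiv> fps_X * (fps_X + fps_const yvar) * inverse ((1 - 2 * fps_X) ^ 2)"

lemma uu0: "fps_nth uu 0 = 0"
  by (simp add: mult.assoc)

lemma step1: "qq * uu^m = fps_X^m * (fps_X + fps_const yvar)^m * qq^(Suc (2*m))"
proof -
  have "uu^m = fps_X^m * (fps_X + fps_const yvar)^m * qq^(2*m)"
    by (simp only: power_mult_distrib fps_inverse_power power_mult)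
  then show ?thesis by (simp only: power_Suc mult_ac)
qed

lemma step2: "(fps_X + fps_const yvar)^m = (\<Sum>i\<le>m. fps_const (of_nat (m choose i) * yvar^(m-i)) * fps_X^i)"
  unfolding binomial_ring
proof (rule sum.cong[OF refl])
  fix i
  have "fps_const (of_nat (m choose i) * yvar^(m-i)) = of_nat (m choose i) * fps_const yvar ^ (m-i)"
    by (simp only: fps_const_mult[symmetric] fps_const_power fps_of_nat)
  then show "of_nat (m choose i) * fps_X ^ i * fps_const yvar ^ (m - i) = fps_const (of_nat (m choose i) * yvar^(m-i)) * fps_X^i"
    by (simp only: mult_ac)
qed

lemma quu: "qq * uu^m = (\<Sum>i\<le>m. fps_const (of_nat (m choose i) * yvar^(m-i)) * (fps_X^(m+i) * qq^(Suc (2*m))))"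
  unfolding step1 step2 sum_distrib_right sum_distrib_left
proof (rule sum.cong[OF refl])
  fix i
  show "fps_X ^ m * (fps_const (of_nat (m choose i) * yvar ^ (m - i)) * fps_X ^ i) * qq ^ Suc (2 * m) =
         fps_const (of_nat (m choose i) * yvar ^ (m - i)) * (fps_X ^ (m + i) * qq ^ Suc (2 * m))"
    by (simp only: power_add mult_ac)
qed

lemma quu_nth: "fps_nth (qq * uu^m) n = (\<Sum>i\<le>m. of_nat (m choose i) * yvar^(m-i) *
    (if m+i \<le> n then of_nat ((2*m + (n-(m+i))) choose (n-(m+i))) * 2^(n-(m+i)) else 0))"
  unfolding quu fps_sum_nth fps_mult_left_const_nth fps_X_power_mult_nth q_pow
  by (rule sum.cong[OF refl]) auto



definition vv :: "nat \<Rightarrow> nat \<Rightarrow> nat \<Rightarrow> rat" where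
  "vv n m i = ((1 / of_nat (m+1)) * of_nat ((2*m) choose m)) * of_nat (m choose i) *
     (if m+i \<le> n then of_nat ((2*m + (n-(m+i))) choose (n-(m+i))) * 2^(n-(m+i)) else 0)"

lemma inner_delta:
  fixes m k :: nat
  shows "(\<Sum>i\<le>m. if m - i = k then f i else (0::'a::comm_monoid_add)) = (if k \<le> m then f (m-k) else 0)"
proof (cases "k \<le> m")
  case True
  have "(\<Sum>i\<le>m. if m - i = k then f i else 0) = (\<Sum>i\<le>m. if i = m - k then f i else 0)"
  proof (rule sum.cong[OF refl])
    fix i assume "i \<in> {..m}"
    then have "i \<le> m" by simp
    then have "(m-i = k) = (i = m-k)" using True by linarith
    then show "(if m - i = k then f i else 0) = (if i = m - k then f i else 0)" by simp
  qed
  also have "\<dots> = f (m-k)" by (simp add: sum.delta)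
  finally show ?thesis using True by simp
next
  case False
  have "(\<Sum>i\<le>m. if m - i = k then f i else 0) = 0"
    by (rule sum.neutral) (use False in auto)
  then show ?thesis using False by simp
qed

lemma termwise: "(if k \<le> m then vv n m (m-k) else 0) = FF k (n+k) m"
proof (cases "k \<le> m")
  case False
  then show ?thesis by (simp add: FF_def binomial_eq_0)
next
  case True
  have sym1: "m choose (m-k) = m choose k" using binomial_symmetric[OF True] by simp
  show ?thesis
  proof (cases "m + (m-k) \<le> n")
    case c: True
    have J: "n - (m + (m-k)) = n + k - 2*m" "2*m + (n + k - 2*m) = n+k" using True c by auto
    have sym2: "(n+k) choose (n+k-2*m) = (n+k) choose (2*m)"
      using binomial_symmetric[of "2*m" "n+k"] True c by simp
    show ?thesis using True c unfolding vv_def FF_def cat_def J sym1 sym2 by simp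
  next
    case c: False
    then have "n + k < 2*m" using True by simp
    then show ?thesis using True c unfolding vv_def FF_def by (simp add: binomial_eq_0)
  qed
qed

lemma poly_main: "(\<Sum>k\<le>n. monom (borel n k) k) = (\<Sum>m\<le>n. \<Sum>i\<le>m. monom (vv n m i) (m-i))"
proof (rule poly_eqI)
  fix k
  have L: "coeff (\<Sum>k\<le>n. monom (borel n k) k) k = (if k \<le> n then borel n k else 0)"
    by (simp add: coeff_sum coeff_monom)
  have "coeff (\<Sum>m\<le>n. \<Sum>i\<le>m. monom (vv n m i) (m-i)) k = (\<Sum>m\<le>n. \<Sum>i\<le>m. if m - i = k then vv n m i else 0)"
    by (simp add: coeff_sum coeff_monom)
  also have "\<dots> = (\<Sum>m\<le>n. if k \<le> m then vv n m (m-k) else 0)"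
    by (simp only: inner_delta)
  also have "\<dots> = (if k \<le> n then borel n k else 0)"
  proof (cases "k \<le> n")
    case True
    then show ?thesis by (simp only: termwise borel_eq[OF True] if_True)
  next
    case False
    have "(\<Sum>m\<le>n. if k \<le> m then vv n m (m-k) else 0) = 0"
      by (rule sum.neutral) (use False in auto)
    then show ?thesis using False by simp
  qed
  finally show "coeff (\<Sum>k\<le>n. monom (borel n k) k) k = coeff (\<Sum>m\<le>n. \<Sum>i\<le>m. monom (vv n m i) (m-i)) k"
    using L by simp
qed

theorem mainTheorem3:
  shows "borel_gf = inverse (1 - 2 * fps_X) *
     fps_compose catalan_gf (fps_X * (fps_X + fps_const yvar) * inverse ((1 - 2 * fps_X) ^ 2))"
proof (rule fps_ext)
  fix n
  have "fps_nth (qq * (catalan_gf oo uu)) n = (\<Sum>m\<le>n. fps_nth catalan_gf m * fps_nth (qq * uu^m) n)"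
    by (rule compose_swap[OF uu0])
  also have "\<dots> = (\<Sum>m\<le>n. \<Sum>i\<le>m. Fract (monom (vv n m i) (m-i)) 1)"
  proof (rule sum.cong[OF refl])
    fix m
    show "fps_nth catalan_gf m * fps_nth (qq * uu^m) n = (\<Sum>i\<le>m. Fract (monom (vv n m i) (m-i)) 1)"
      unfolding quu_nth sum_distrib_left
    proof (rule sum.cong[OF refl])
      fix i
      show "fps_nth catalan_gf m * (of_nat (m choose i) * yvar ^ (m - i) *
          (if m + i \<le> n then of_nat (2 * m + (n - (m + i)) choose (n - (m + i))) * 2 ^ (n - (m + i)) else 0)) =
          Fract (monom (vv n m i) (m - i)) 1"
        unfolding ifR catalan_gf_def fps_nth_Abs_fps FR vv_def ..
    qed
  qed
  also have "\<dots> = Fract (\<Sum>m\<le>n. \<Sum>i\<le>m. monom (vv n m i) (m-i)) 1"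
    by (simp only: Fract_sum)
  also have "\<dots> = fps_nth borel_gf n"
    unfolding borel_gf_def fps_nth_Abs_fps poly_main ..
  finally show "fps_nth borel_gf n = fps_nth (qq * (catalan_gf oo uu)) n" by simp
qed


end
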